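(* Let $b>\tfrac12$ and $m\in\mathbb Z$, and define the functions $f(t)=\vartheta_3(\pi t+2\pi bm,\,ib)$ and $g(t)=\vartheta_3(\pi t,\,ib)$ for $t\in\mathbb R$. Then $$\sup_{t\in\mathbb R}|f(t)-g(t)|\le 8\pi|m|\,(b-\tfrac12)\sum_{k=1}^\infty k\,e^{-\pi bk^2}.$$
   Context: For $z,t\in\mathbb C$ with $\operatorname{Im}t>0$: $\vartheta_3(z,t)=\sum_{n\in\mathbb Z}e^{\pi i t n^2}e^{2izn}$. *)

theory Defs
  imports "HOL-Analysis.Analysis"
begin

definition theta3 :: "complex \<Rightarrow> complex \<Rightarrow> complex" where
  "theta3 z t = (\<Sum>\<^sub>\<infinity>n\<in>(UNIV::int set).
      exp (pi * \<i> * t * of_int n ^ 2) * exp (2 * \<i> * z * of_int n))"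

end

theory Submission
  imports Defs
begin

lemma norm_exp_i_minus_1: "norm (exp (\<i> * of_real x) - 1) \<le> \<bar>x\<bar>"
proof -
  have e: "exp (\<i> * of_real x) = Complex (cos x) (sin x)"
    by (simp add: exp_eq_polar cis.ctr)
  have "(norm (exp (\<i> * of_real x) - 1))^2 = (cos x - 1)^2 + (sin x)^2"
    by (simp add: e cmod_def)
  also have "\<dots> = 2 - 2 * cos x" by (simp add: power2_eq_square algebra_simps sin_squared_eq)
  also have "\<dots> = 4 * (sin (x/2))^2" using cos_double_sin[of "x/2"] by simp
  also have "\<dots> \<le> x^2"
  proof -
    have "\<bar>sin (x/2)\<bar> \<le> \<bar>x/2\<bar>" by (rule abs_sin_x_le_abs_x)
    hence "(sin (x/2))^2 \<le> (x/2)^2" by (metis abs_le_square_iff)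
    thus ?thesis by (simp add: power_divide)
  qed
  finally show ?thesis by (metis abs_le_square_iff abs_norm_cancel)
qed

lemma a_summable:
  fixes b :: real assumes "b > 1/2"
  shows "summable (\<lambda>k. real (Suc k) * exp (- pi * b * (real (Suc k))^2))"
proof (rule summable_ratio_test[where c = "1/2" and N = 0])
  fix n :: nat
  have "3 * (1/2) \<le> pi * b" using assms pi_gt3 by (intro mult_mono) auto
  hence pb: "pi * b \<ge> 1" by linarith
  have "exp (pi * b * (2 * real n + 3)) \<ge> 1 + pi * b * (2 * real n + 3)" by (rule exp_ge_add_one_self)
  also have "1 + pi * b * (2 * real n + 3) \<ge> 2 * real n + 4"
    using pb by (smt (verit) mult_le_cancel_right1 of_nat_0_le_iff)
  finally have E: "exp (pi * b * (2 * real n + 3)) \<ge> 2 * real n + 4" .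
  have "real (Suc (Suc n)) * 2 \<le> real (Suc n) * exp (pi * b * (2 * real n + 3))"
  proof -
    have "real (Suc (Suc n)) * 2 \<le> real (Suc n) * (2 * real n + 4)" by (simp add: algebra_simps)
    also have "\<dots> \<le> real (Suc n) * exp (pi * b * (2 * real n + 3))"
      using E by (intro mult_left_mono) auto
    finally show ?thesis .
  qed
  hence "real (Suc (Suc n)) * 2 * exp (- pi * b * (real (Suc (Suc n)))^2)
        \<le> real (Suc n) * exp (pi * b * (2 * real n + 3)) * exp (- pi * b * (real (Suc (Suc n)))^2)"
    by (intro mult_right_mono) auto
  also have "exp (pi * b * (2 * real n + 3)) * exp (- pi * b * (real (Suc (Suc n)))^2)
      = exp (- pi * b * (real (Suc n))^2)"
    by (simp add: exp_add[symmetric] power2_eq_square algebra_simps)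
  hence "real (Suc n) * exp (pi * b * (2 * real n + 3)) * exp (- pi * b * (real (Suc (Suc n)))^2)
      = real (Suc n) * exp (- pi * b * (real (Suc n))^2)" by (simp add: mult.assoc)
  finally show "norm (real (Suc (Suc n)) * exp (- pi * b * (real (Suc (Suc n)))^2))
      \<le> 1/2 * norm (real (Suc n) * exp (- pi * b * (real (Suc n))^2))" by (simp add: algebra_simps)
qed simp

lemma h_has_sum:
  fixes b :: real assumes "b > 1/2"
  shows "((\<lambda>n::int. \<bar>real_of_int n\<bar> * exp (- pi * b * (real_of_int n)^2)) has_sum
     (2 * (\<Sum>k. real (Suc k) * exp (- pi * b * (real (Suc k))^2)))) UNIV"
proof -
  define a where "a = (\<lambda>k. real (Suc k) * exp (- pi * b * (real (Suc k))^2))"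
  define h where "h = (\<lambda>n::int. \<bar>real_of_int n\<bar> * exp (- pi * b * (real_of_int n)^2))"
  have aS: "(a has_sum suminf a) UNIV"
    using a_summable[OF assms] unfolding a_def[symmetric]
    by (intro sums_nonneg_imp_has_sum summable_sums) (auto simp: a_def)
  have i1: "inj (\<lambda>k::nat. int (Suc k))" by (auto simp: inj_def)
  have i2: "inj (\<lambda>k::nat. - int (Suc k))" by (auto simp: inj_def)
  have c1: "h \<circ> (\<lambda>k::nat. int (Suc k)) = a" by (auto simp: a_def h_def fun_eq_iff)
  have c2: "h \<circ> (\<lambda>k::nat. - int (Suc k)) = a" by (auto simp: a_def h_def fun_eq_iff power2_eq_square algebra_simps)
  have P: "(h has_sum suminf a) (range (\<lambda>k::nat. int (Suc k)))"
    using has_sum_reindex[OF i1, of h] c1 aS by simp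
  have N: "(h has_sum suminf a) (range (\<lambda>k::nat. - int (Suc k)))"
    using has_sum_reindex[OF i2, of h] c2 aS by simp
  have Z: "(h has_sum 0) {0}" by (rule has_sum_finiteI) (auto simp: h_def)
  have PN: "(h has_sum (suminf a + suminf a)) (range (\<lambda>k::nat. int (Suc k)) \<union> range (\<lambda>k::nat. - int (Suc k)))"
    by (rule has_sum_Un_disjoint[OF P N]) auto
  have PNZ: "(h has_sum (suminf a + suminf a + 0)) ((range (\<lambda>k::nat. int (Suc k)) \<union> range (\<lambda>k::nat. - int (Suc k))) \<union> {0})"
    by (rule has_sum_Un_disjoint[OF PN Z]) auto
  have U: "(range (\<lambda>k::nat. int (Suc k)) \<union> range (\<lambda>k::nat. - int (Suc k))) \<union> {0} = UNIV"
  proof -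
    have "n \<in> (range (\<lambda>k::nat. int (Suc k)) \<union> range (\<lambda>k::nat. - int (Suc k))) \<union> {0}" for n :: int
    proof -
      consider "n > 0" | "n < 0" | "n = 0" by linarith
      thus ?thesis
      proof cases
        case 1 hence "n = int (Suc (nat (n - 1)))" by simp
        thus ?thesis by blast
      next
        case 2 hence "n = - int (Suc (nat (- n - 1)))" by simp
        thus ?thesis by blast
      qed simp
    qed
    thus ?thesis by blast
  qed
  show ?thesis using PNZ unfolding U h_def[symmetric] a_def[symmetric] by simp
qed


theorem lemma6p1:
  fixes b :: real and m :: int
  assumes "b > 1/2"
  shows "(SUP t\<in>(UNIV::real set).
            ereal (norm (theta3 (of_real (pi * t + 2 * pi * b * of_int m)) (\<i> * of_real b)
                       - theta3 (of_real (pi * t)) (\<i> * of_real b))))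
         \<le> ereal (8 * pi * \<bar>of_int m\<bar> * (b - 1/2) *
                   (\<Sum>k. real (Suc k) * exp (- pi * b * (real (Suc k))^2)))"
proof (rule SUP_least)
  fix t :: real
  define S where "S = (\<Sum>k. real (Suc k) * exp (- pi * b * (real (Suc k))^2))"
  define h where "h = (\<lambda>n::int. \<bar>real_of_int n\<bar> * exp (- pi * b * (real_of_int n)^2))"
  define e where "e = (\<lambda>n::int. exp (- pi * b * (real_of_int n)^2))"
  define T where "T = (\<lambda>z n. exp (pi * \<i> * (\<i> * of_real b) * of_int n ^ 2) * exp (2 * \<i> * z * of_int n))"
  define C where "C = 4 * pi * \<bar>real_of_int m\<bar> * (b - 1/2)"
  have C0: "C \<ge> 0" using assms by (simp add: C_def)
  have hS: "(h has_sum 2 * S) UNIV" using h_has_sum[OF assms] by (simp add: h_def S_def)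
  hence hsum: "h summable_on UNIV" by (auto simp: summable_on_def)
  have "e summable_on (UNIV - {0})"
  proof (rule summable_on_comparison_test[where f = h])
    show "h summable_on (UNIV - {0})" by (rule summable_on_subset_banach[OF hsum]) auto
  next
    fix n :: int assume "n \<in> UNIV - {0}"
    hence "\<bar>real_of_int n\<bar> \<ge> 1" by auto
    thus "e n \<le> h n" unfolding e_def h_def
      using mult_right_mono[of 1 "\<bar>real_of_int n\<bar>" "exp (- pi * b * (real_of_int n)^2)"] by simp
  qed (auto simp: e_def)
  hence esum: "e summable_on UNIV"
    using summable_on_insert_iff[of e 0 "UNIV - {0}"] by (simp add: insert_absorb)
  have normT: "norm (T (of_real x) n) = e n" for x n
    by (simp add: T_def e_def norm_mult norm_exp_eq_Re)
  have Tsum: "T (of_real x) summable_on UNIV" for x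
    by (rule abs_summable_summable) (use esum normT in simp)
  define z1 where "z1 = complex_of_real (pi * t + 2 * pi * b * of_int m)"
  define z2 where "z2 = complex_of_real (pi * t)"
  define d where "d = (\<lambda>n. T z1 n - T z2 n)"
  have dbound: "norm (d n) \<le> C * h n" for n
  proof -
    define x where "x = 4 * pi * (b - 1/2) * real_of_int m * real_of_int n"
    have ex: "exp (2 * \<i> * complex_of_real (2 * pi * b * of_int m) * of_int n)
        = exp (\<i> * of_real x) * exp (\<i> * (of_int (m*n) * (of_real pi * 2)))"
      by (simp add: x_def exp_add[symmetric] algebra_simps)
    have "d n = T z2 n * (exp (2 * \<i> * complex_of_real (2 * pi * b * of_int m) * of_int n) - 1)"
      by (simp add: d_def T_def z1_def z2_def exp_add[symmetric] algebra_simps)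
    also have "\<dots> = T z2 n * (exp (\<i> * of_real x) - 1)"
      using ex exp_2pi_1_int[of "m*n"] by (simp only: mult_1_right)
    finally have "norm (d n) = e n * norm (exp (\<i> * of_real x) - 1)"
      by (simp only: norm_mult normT z2_def)
    also have "\<dots> \<le> e n * \<bar>x\<bar>"
      by (intro mult_left_mono norm_exp_i_minus_1) (auto simp: e_def)
    also have "\<dots> = C * h n" using assms
      by (simp add: x_def C_def h_def e_def abs_mult)
    finally show ?thesis .
  qed
  have Chsum: "(\<lambda>n. C * h n) summable_on UNIV" by (rule summable_on_cmult_right[OF hsum])
  have dabs: "(\<lambda>n. norm (d n)) summable_on UNIV"
    by (rule summable_on_comparison_test[OF Chsum]) (use dbound in auto)
  have s1: "T z1 summable_on UNIV" unfolding z1_def by (rule Tsum)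
  have s2: "T z2 summable_on UNIV" unfolding z2_def by (rule Tsum)
  have "((\<lambda>n. T z1 n + - T z2 n) has_sum (infsum (T z1) UNIV + - infsum (T z2) UNIV)) UNIV"
    by (intro has_sum_add has_sum_uminus[THEN iffD2] has_sum_infsum s1) (simp add: s2)
  hence "infsum d UNIV = infsum (T z1) UNIV - infsum (T z2) UNIV"
    by (simp add: d_def infsumI)
  hence eq: "theta3 z1 (\<i> * of_real b) - theta3 z2 (\<i> * of_real b) = infsum d UNIV"
    by (simp add: theta3_def T_def)
  have "norm (infsum d UNIV) \<le> infsum (\<lambda>n. norm (d n)) UNIV" by (rule norm_infsum_bound[OF dabs])
  also have "\<dots> \<le> infsum (\<lambda>n. C * h n) UNIV"
    by (rule infsum_mono[OF dabs Chsum]) (use dbound in auto)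
  also have "\<dots> = C * (2 * S)" using hS by (simp add: infsum_cmult_right infsumI hsum)
  finally have "norm (theta3 z1 (\<i> * of_real b) - theta3 z2 (\<i> * of_real b)) \<le> C * (2 * S)"
    using eq by simp
  thus "ereal (norm (theta3 (of_real (pi * t + 2 * pi * b * of_int m)) (\<i> * of_real b)
                       - theta3 (of_real (pi * t)) (\<i> * of_real b)))
         \<le> ereal (8 * pi * \<bar>of_int m\<bar> * (b - 1/2) *
                   (\<Sum>k. real (Suc k) * exp (- pi * b * (real (Suc k))^2)))"
    by (simp add: z1_def z2_def C_def S_def)
qed

end
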